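(* Let $H$, $U$, $Y$ be Hilbert spaces, let $A : \mathcal{D}(A) \subset H \to H$ be a skew-adjoint operator on $H$, and let $B \in \mathcal{L}(U,H)$, $C \in \mathcal{L}(H,Y)$, $K \in \mathcal{L}(Y,U)$. Let $\gamma > 0$. Consider the event-triggered closed-loop system $$\dot z(t) = Az(t) + BKCz(t_k), \quad t \in [t_k, t_{k+1}),\ k \in \mathbb{N}, \qquad z(0) = z_0,$$ with $t_0 = 0$ and update law $$t_{k+1} = \sup\big\{ t > t_k : \forall \tau \in [t_k, t),\ \|Cz(\tau) - Cz(t_k)\|_Y^2 \leq \gamma^2 \|z(\tau)\|_H^2 \big\},$$ and let $T^* = +\infty$ if the sequence $(t_k)$ is finite and $T^* = \limsup_{k\to\infty} t_k$ otherwise, $z \in \mathcal{C}([0,T^* );H)$ being the associated mild (Duhamel) solution. If $z_0 \in \mathcal{D}(A)$, then $T^* = +\infty$; in particular the sequence $(t_k)$ has no finite accumulation point (no Zeno phenomenon).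
   Context: $\mathcal{L}(X,Z)$ denotes bounded linear operators from $X$ to $Z$. *)

theory Defs
  imports "HOL-Analysis.Analysis"
begin

definition adj_domain :: "'h::real_inner set \<Rightarrow> ('h \<Rightarrow> 'h) \<Rightarrow> 'h set" where
  "adj_domain D A = {y. \<exists>w. \<forall>x\<in>D. inner (A x) y = inner x w}"

definition adj :: "'h::real_inner set \<Rightarrow> ('h \<Rightarrow> 'h) \<Rightarrow> 'h \<Rightarrow> 'h" where
  "adj D A y = (THE w. \<forall>x\<in>D. inner (A x) y = inner x w)"

definition skew_adjoint :: "'h::real_inner set \<Rightarrow> ('h \<Rightarrow> 'h) \<Rightarrow> bool" where
  "skew_adjoint D A \<longleftrightarrow> subspace D \<and> closure D = UNIV \<and>
     (\<forall>x\<in>D. \<forall>y\<in>D. A (x + y) = A x + A y) \<and>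
     (\<forall>c. \<forall>x\<in>D. A (c *\<^sub>R x) = c *\<^sub>R A x) \<and>
     adj_domain D A = D \<and> (\<forall>y\<in>D. adj D A y = - A y)"

definition c0_semigroup :: "(real \<Rightarrow> 'h::real_normed_vector \<Rightarrow> 'h) \<Rightarrow> bool" where
  "c0_semigroup T \<longleftrightarrow> (\<forall>t\<ge>0. bounded_linear (T t)) \<and> T 0 = id \<and>
     (\<forall>s\<ge>0. \<forall>t\<ge>0. T (s + t) = T s \<circ> T t) \<and>
     (\<forall>x. continuous_on {0..} (\<lambda>t. T t x))"

definition generator :: "(real \<Rightarrow> 'h::real_normed_vector \<Rightarrow> 'h) \<Rightarrow> 'h set \<Rightarrow> ('h \<Rightarrow> 'h) \<Rightarrow> bool" where
  "generator T D A \<longleftrightarrow>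
     D = {x. \<exists>y. ((\<lambda>h. (1 / h) *\<^sub>R (T h x - x)) \<longlongrightarrow> y) (at_right 0)} \<and>
     (\<forall>x\<in>D. ((\<lambda>h. (1 / h) *\<^sub>R (T h x - x)) \<longlongrightarrow> A x) (at_right 0))"

definition duhamel :: "(real \<Rightarrow> 'h::real_normed_vector \<Rightarrow> 'h) \<Rightarrow> 'h \<Rightarrow> real \<Rightarrow> 'h \<Rightarrow> real \<Rightarrow> 'h" where
  "duhamel T f a x \<tau> = T (\<tau> - a) x + integral {a..\<tau>} (\<lambda>r. T (\<tau> - r) f)"

text \<open>Maximal time: +infinity if the sequence of triggering times is finite
  (encoded by some t k = infinity), limsup otherwise.\<close>
definition Tstar :: "(nat \<Rightarrow> ereal) \<Rightarrow> ereal" where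
  "Tstar t = (if \<exists>k. t k = \<infinity> then \<infinity> else limsup t)"

end

theory Submission
  imports Defs
begin


typedef 'a bw = "UNIV :: 'a set" by auto

instantiation bw :: (real_vector) real_vector
begin
definition zero_bw_def: "(0::'a::real_vector bw) = Abs_bw 0"
definition plus_bw_def: "(x::'a::real_vector bw) + y = Abs_bw (Rep_bw x + Rep_bw y)"
definition minus_bw_def: "(x::'a::real_vector bw) - y = Abs_bw (Rep_bw x - Rep_bw y)"
definition uminus_bw_def: "- (x::'a::real_vector bw) = Abs_bw (- Rep_bw x)"
definition scaleR_bw_def: "scaleR r (x::'a::real_vector bw) = Abs_bw (r *\<^sub>R Rep_bw x)"
instance proof
  fix a b c :: "'a bw" and r s :: real
  show "a + b + c = a + (b + c)" by (simp add: plus_bw_def Abs_bw_inverse add.assoc)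
  show "a + b = b + a" by (simp add: plus_bw_def add.commute)
  show "0 + a = a" by (simp add: plus_bw_def zero_bw_def Abs_bw_inverse Rep_bw_inverse)
  show "- a + a = 0" by (simp add: plus_bw_def zero_bw_def uminus_bw_def Abs_bw_inverse)
  show "a - b = a + - b" by (simp add: plus_bw_def minus_bw_def uminus_bw_def Abs_bw_inverse)
  show "r *\<^sub>R (a + b) = r *\<^sub>R a + r *\<^sub>R b"
    by (simp add: plus_bw_def scaleR_bw_def Abs_bw_inverse scaleR_add_right)
  show "(r + s) *\<^sub>R a = r *\<^sub>R a + s *\<^sub>R a"
    by (simp add: plus_bw_def scaleR_bw_def Abs_bw_inverse scaleR_add_left)
  show "r *\<^sub>R s *\<^sub>R a = (r * s) *\<^sub>R a" by (simp add: scaleR_bw_def Abs_bw_inverse)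
  show "1 *\<^sub>R a = a" by (simp add: scaleR_bw_def Rep_bw_inverse)
qed
end

instantiation bw :: (real_normed_vector) real_normed_vector
begin
definition norm_bw_def: "norm (x::'a::real_normed_vector bw) = norm (Rep_bw x)"
definition sgn_bw_def: "sgn (x::'a::real_normed_vector bw) = x /\<^sub>R norm x"
definition dist_bw_def: "dist (x::'a::real_normed_vector bw) y = norm (x - y)"
definition uniformity_bw_def: "uniformity = (INF e\<in>{0<..}. principal {(x, y). dist (x::'a::real_normed_vector bw) y < e})"
definition open_bw_def: "open U = (\<forall>x\<in>U. \<forall>\<^sub>F (x', y) in uniformity. x' = x \<longrightarrow> y \<in> (U :: 'a::real_normed_vector bw set))"
instance proof
  fix a b c :: "'a bw" and r s :: real
  show "(norm a = 0) = (a = 0)"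
    by (metis Abs_bw_inverse Rep_bw_inverse UNIV_I norm_bw_def norm_eq_zero zero_bw_def)
  show "norm (a + b) \<le> norm a + norm b"
    by (simp add: norm_bw_def plus_bw_def Abs_bw_inverse norm_triangle_ineq)
  show "norm (r *\<^sub>R a) = \<bar>r\<bar> * norm a" by (simp add: norm_bw_def scaleR_bw_def Abs_bw_inverse)
  show "sgn a = a /\<^sub>R norm a" by (rule sgn_bw_def)
  show "dist a b = norm (a - b)" by (rule dist_bw_def)
  show "(uniformity :: ('a::real_normed_vector bw \<times> 'a::real_normed_vector bw) filter) = (INF e\<in>{0<..}. principal {(x, y). dist x y < e})"
    by (rule uniformity_bw_def)
  fix U :: "'a::real_normed_vector bw set"
  show "open U = (\<forall>x\<in>U. \<forall>\<^sub>F (x', y) in uniformity. x' = x \<longrightarrow> y \<in> U)"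
    by (rule open_bw_def)
qed
end

lemma Rep_bw_add: "Rep_bw (x + y) = Rep_bw x + Rep_bw y"
  by (simp add: plus_bw_def Abs_bw_inverse)
lemma Rep_bw_scaleR: "Rep_bw (r *\<^sub>R x) = r *\<^sub>R Rep_bw x"
  by (simp add: scaleR_bw_def Abs_bw_inverse)
lemma Rep_bw_diff: "Rep_bw (x - y) = Rep_bw x - Rep_bw y"
  by (simp add: minus_bw_def Abs_bw_inverse)
lemma dist_bw: "dist x y = dist (Rep_bw x) (Rep_bw y)"
  by (simp add: dist_bw_def norm_bw_def Rep_bw_diff dist_norm)

instance bw :: ("{real_normed_vector, complete_space}") complete_space
proof
  fix X :: "nat \<Rightarrow> 'a bw"
  assume "Cauchy X"
  then have "Cauchy (\<lambda>n. Rep_bw (X n))" unfolding Cauchy_def dist_bw by simp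
  then obtain L where L: "(\<lambda>n. Rep_bw (X n)) \<longlonglongrightarrow> L" by (auto simp: Cauchy_convergent_iff convergent_def)
  have "X \<longlonglongrightarrow> Abs_bw L"
    using L unfolding lim_sequentially dist_bw by (simp add: Abs_bw_inverse)
  then show "convergent X" by (auto simp: convergent_def)
qed

instance bw :: ("{real_normed_vector, complete_space}") banach ..

lemma bl_Rep_bw: "bounded_linear Rep_bw"
  by (rule bounded_linear_intro[where K=1]) (auto simp: Rep_bw_add Rep_bw_scaleR norm_bw_def)

lemma bl_Abs_bw: "bounded_linear Abs_bw"
  by (rule bounded_linear_intro[where K=1])
     (auto simp: plus_bw_def scaleR_bw_def norm_bw_def Abs_bw_inverse)

lemma cs_has_integral:
  fixes f :: "real \<Rightarrow> 'a::{real_normed_vector, complete_space}"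
  assumes "continuous_on {a..b} f"
  shows "(f has_integral Rep_bw (integral {a..b} (\<lambda>x. Abs_bw (f x)))) {a..b}"
proof -
  have "continuous_on {a..b} (\<lambda>x. Abs_bw (f x))"
    by (rule continuous_on_compose2[OF linear_continuous_on[OF bl_Abs_bw] assms]) auto
  then have "(\<lambda>x. Abs_bw (f x)) integrable_on {a..b}" by (rule integrable_continuous_interval)
  then have "((\<lambda>x. Abs_bw (f x)) has_integral integral {a..b} (\<lambda>x. Abs_bw (f x))) {a..b}"
    by (rule integrable_integral)
  from has_integral_linear[OF this bl_Rep_bw] show ?thesis
    by (simp add: o_def Abs_bw_inverse)
qed

lemma cs_integrable:
  fixes f :: "real \<Rightarrow> 'a::{real_normed_vector, complete_space}"
  assumes "continuous_on {a..b} f"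
  shows "f integrable_on {a..b}"
  using cs_has_integral[OF assms] by blast

lemma cs_integral:
  fixes f :: "real \<Rightarrow> 'a::{real_normed_vector, complete_space}"
  assumes "continuous_on {a..b} f"
  shows "integral {a..b} f = Rep_bw (integral {a..b} (\<lambda>x. Abs_bw (f x)))"
  using cs_has_integral[OF assms] by blast

lemma cs_integral_combine:
  fixes f :: "real \<Rightarrow> 'a::{real_normed_vector, complete_space}"
  assumes "a \<le> c" "c \<le> b" and cont: "continuous_on {a..b} f"
  shows "integral {a..c} f + integral {c..b} f = integral {a..b} f"
proof -
  have c1: "continuous_on {a..c} f" "continuous_on {c..b} f"
    using continuous_on_subset[OF cont] assms by auto
  have ca: "continuous_on {a..b} (\<lambda>x. Abs_bw (f x))"
    by (rule continuous_on_compose2[OF linear_continuous_on[OF bl_Abs_bw] cont]) auto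
  have "integral {a..c} (\<lambda>x. Abs_bw (f x)) + integral {c..b} (\<lambda>x. Abs_bw (f x))
      = integral {a..b} (\<lambda>x. Abs_bw (f x))"
    by (rule Henstock_Kurzweil_Integration.integral_combine[OF assms(1,2)])
       (rule integrable_continuous_interval[OF ca])
  then show ?thesis
    unfolding cs_integral[OF cont] cs_integral[OF c1(1)] cs_integral[OF c1(2)]
    by (metis Rep_bw_add)
qed

lemma cs_integral_bound:
  fixes f :: "real \<Rightarrow> 'a::{real_normed_vector, complete_space}"
  assumes "a \<le> b" and cont: "continuous_on {a..b} f" and bnd: "\<And>t. t \<in> {a..b} \<Longrightarrow> norm (f t) \<le> B"
  shows "norm (integral {a..b} f) \<le> B * (b - a)"
proof -
  have ca: "continuous_on {a..b} (\<lambda>x. Abs_bw (f x))"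
    by (rule continuous_on_compose2[OF linear_continuous_on[OF bl_Abs_bw] cont]) auto
  have "norm (integral {a..b} (\<lambda>x. Abs_bw (f x))) \<le> B * (b - a)"
    by (rule integral_bound[OF assms(1) ca]) (use bnd in \<open>simp add: norm_bw_def Abs_bw_inverse\<close>)
  then show ?thesis unfolding cs_integral[OF cont] by (simp add: norm_bw_def)
qed



lemma dense_zero:
  fixes D :: "'h::real_inner set"
  assumes "closure D = UNIV" "\<forall>x\<in>D. inner x w = 0"
  shows "w = 0"
proof -
  have "closed {x. inner x w = 0}"
    by (intro closed_Collect_eq continuous_intros)
  moreover have "D \<subseteq> {x. inner x w = 0}" using assms(2) by auto
  ultimately have "closure D \<subseteq> {x. inner x w = 0}" by (rule closure_minimal[rotated])
  moreover have "w \<in> closure D" using assms(1) by simp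
  ultimately have "inner w w = 0" by auto
  then show ?thesis by (simp only: inner_eq_zero_iff)
qed

lemma skew_inner_zero:
  assumes skew: "skew_adjoint D A" and y: "y \<in> D"
  shows "inner (A y) y = 0"
proof -
  from skew have dense: "closure D = UNIV" and ad: "adj_domain D A = D"
    and adjeq: "\<forall>y\<in>D. adj D A y = - A y" unfolding skew_adjoint_def by auto
  from y ad obtain w where w: "\<forall>x\<in>D. inner (A x) y = inner x w"
    unfolding adj_domain_def by auto
  have uniq: "\<exists>!w. \<forall>x\<in>D. inner (A x) y = inner x w"
  proof (rule ex1I[of _ w])
    show "\<forall>x\<in>D. inner (A x) y = inner x w" by fact
  next
    fix w' assume w': "\<forall>x\<in>D. inner (A x) y = inner x w'"
    have "\<forall>x\<in>D. inner x (w' - w) = 0" using w w' by (simp add: inner_diff_right)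
    then have "w' - w = 0" using dense_zero[OF dense] by blast
    then show "w' = w" by simp
  qed
  have "\<forall>x\<in>D. inner (A x) y = inner x (adj D A y)"
    unfolding adj_def by (rule theI'[OF uniq])
  then have "inner (A y) y = inner y (- A y)" using y adjeq by auto
  then show ?thesis by (simp add: inner_commute)
qed

lemma right_deriv_zero_le:
  fixes g :: "real \<Rightarrow> real"
  assumes cont: "continuous_on {0..} g"
    and der: "\<And>t. t \<ge> 0 \<Longrightarrow> ((\<lambda>h. (g (t+h) - g t)/h) \<longlongrightarrow> 0) (at_right 0)"
    and e: "e > 0" and b: "b \<ge> 0"
  shows "g b \<le> g 0 + e * b"
proof (rule ccontr)
  assume nb: "\<not> ?thesis"
  define G where "G t = g t - g 0 - e * t" for t
  have G0: "G 0 = 0" by (simp add: G_def)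
  have Gb: "G b > 0" using nb by (simp add: G_def)
  have Gcont: "continuous_on {0..} G" unfolding G_def
    by (intro continuous_intros cont)
  have Gder: "((\<lambda>h. (G (t+h) - G t)/h) \<longlongrightarrow> - e) (at_right 0)" if "t \<ge> 0" for t
  proof -
    have "((\<lambda>h. (g (t+h) - g t)/h - e) \<longlongrightarrow> 0 - e) (at_right 0)"
      by (intro tendsto_intros der that)
    moreover have "eventually (\<lambda>h. (g (t+h) - g t)/h - e = (G (t+h) - G t)/h) (at_right 0)"
      using eventually_at_right_less[of "0::real"]
      by eventually_elim (simp add: G_def field_simps)
    ultimately show ?thesis by (simp add: tendsto_cong)
  qed
  define Z where "Z = {u\<in>{0..b}. G u > 0}"
  define s where "s = Inf Z"
  have bZ: "b \<in> Z" using Gb b by (simp add: Z_def)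
  have bdd: "bdd_below Z" unfolding Z_def by (rule bdd_belowI[of _ 0]) auto
  have s_le: "s \<le> u" if "u \<in> Z" for u unfolding s_def by (rule cInf_lower[OF that bdd])
  have s0: "s \<ge> 0" unfolding s_def by (rule cInf_greatest) (use bZ Z_def in auto)
  show False
  proof (cases "G s \<le> 0")
    case True
    have "eventually (\<lambda>h. (G (s+h) - G s)/h < 0) (at_right 0)"
      using Gder[OF s0] by (rule order_tendstoD) (use e in simp)
    then obtain d where d: "d > 0" and dH: "\<And>h. h > 0 \<Longrightarrow> h < d \<Longrightarrow> (G (s+h) - G s)/h < 0"
      by (auto simp: eventually_at_right_field)
    have "s + d \<le> Inf Z"
    proof (rule cInf_greatest)
      show "Z \<noteq> {}" using bZ by auto
    next
      fix u assume u: "u \<in> Z"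
      show "s + d \<le> u"
      proof (rule ccontr)
        assume "\<not> s + d \<le> u"
        moreover have "s \<le> u" using s_le u by auto
        moreover have "u \<noteq> s" using u True by (auto simp: Z_def)
        ultimately have "u - s > 0" "u - s < d" by auto
        from dH[OF this] have "G u < G s" using \<open>s \<le> u\<close> by (simp add: divide_less_0_iff)
        then show False using True u by (auto simp: Z_def)
      qed
    qed
    then show False using d s_def by simp
  next
    case False
    then have spos: "s > 0" using s0 G0 by (cases "s = 0") auto
    have sb: "s \<le> b" using s_le bZ by auto
    have "(G \<longlongrightarrow> G s) (at s within {0..})"
      using Gcont s0 by (simp add: continuous_on_def)
    moreover have "0 < G s" using False by simp
    ultimately have "eventually (\<lambda>u. G u > 0) (at s within {0..})"
      by (rule order_tendstoD)
    then obtain d where d: "d > 0" and dH: "\<And>u. u \<in> {0..} \<Longrightarrow> u \<noteq> s \<Longrightarrow> dist u s < d \<Longrightarrow> G u > 0"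
      by (auto simp: eventually_at)
    define u where "u = max 0 (s - d/2)"
    have "u < s" using spos d by (simp add: u_def)
    moreover have "u \<in> Z" unfolding Z_def using dH[of u] d spos sb
      by (auto simp: u_def dist_real_def)
    ultimately show False using s_le by force
  qed
qed

lemma right_deriv_zero_const:
  fixes g :: "real \<Rightarrow> real"
  assumes cont: "continuous_on {0..} g"
    and der: "\<And>t. t \<ge> 0 \<Longrightarrow> ((\<lambda>h. (g (t+h) - g t)/h) \<longlongrightarrow> 0) (at_right 0)"
    and b: "b \<ge> 0"
  shows "g b = g 0"
proof -
  have le: "g b \<le> g 0" if cont: "continuous_on {0..} g"
    and der: "\<And>t. t \<ge> 0 \<Longrightarrow> ((\<lambda>h. (g (t+h) - g t)/h) \<longlongrightarrow> 0) (at_right 0)" for g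
  proof (rule ccontr)
    assume "\<not> g b \<le> g 0"
    then have pos: "g b - g 0 > 0" by simp
    show False
    proof (cases "b = 0")
      case True then show False using pos by simp
    next
      case False
      then have bp: "b > 0" using b by simp
      have "g b \<le> g 0 + ((g b - g 0) / (2*b)) * b"
        by (rule right_deriv_zero_le[OF cont der]) (use pos bp b in auto)
      then show False using pos bp by (simp add: field_simps)
    qed
  qed
  have "g b \<le> g 0" by (rule le[OF cont der])
  moreover have "- g b \<le> - g 0"
  proof (rule le[where g="\<lambda>x. - g x"])
    show "continuous_on {0..} (\<lambda>x. - g x)" by (intro continuous_intros cont)
    fix t :: real assume "t \<ge> 0"
    have "(\<lambda>h. - ((g (t+h) - g t)/h)) = (\<lambda>h. (- g (t+h) - - g t)/h)" by (simp add: fun_eq_iff minus_divide_left)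
    with tendsto_minus[OF der[OF \<open>t \<ge> 0\<close>]]
    show "((\<lambda>h. (- g (t+h) - - g t)/h) \<longlongrightarrow> 0) (at_right 0)" by simp
  qed
  ultimately show ?thesis by simp
qed



lemma c0D:
  assumes "c0_semigroup T"
  shows "\<And>t. t \<ge> 0 \<Longrightarrow> bounded_linear (T t)" "T 0 = id"
    "\<And>s t. s \<ge> 0 \<Longrightarrow> t \<ge> 0 \<Longrightarrow> T (s + t) x = T s (T t x)"
    "continuous_on {0..} (\<lambda>t. T t x)"
  using assms unfolding c0_semigroup_def by auto

lemma T_right_cont:
  assumes "c0_semigroup T"
  shows "((\<lambda>h. T h y) \<longlongrightarrow> y) (at_right 0)"
proof -
  have "((\<lambda>h. T h y) \<longlongrightarrow> T 0 y) (at 0 within {0..})"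
    using c0D(4)[OF assms, of y] by (simp add: continuous_on_def)
  then have "((\<lambda>h. T h y) \<longlongrightarrow> T 0 y) (at 0 within {0<..})"
    by (rule tendsto_within_subset) auto
  then show ?thesis using c0D(2)[OF assms] by simp
qed

lemma gen_shift:
  assumes sg: "c0_semigroup T" and gen: "generator T D A" and x: "x \<in> D" and t: "t \<ge> 0"
  shows "T t x \<in> D" "((\<lambda>h. (1 / h) *\<^sub>R (T h (T t x) - T t x)) \<longlongrightarrow> A (T t x)) (at_right 0)"
proof -
  have lx: "((\<lambda>h. (1 / h) *\<^sub>R (T h x - x)) \<longlongrightarrow> A x) (at_right 0)"
    using gen x unfolding generator_def by auto
  have blt: "bounded_linear (T t)" using c0D(1)[OF sg t] .
  have "((\<lambda>h. T t ((1 / h) *\<^sub>R (T h x - x))) \<longlongrightarrow> T t (A x)) (at_right 0)"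
    by (rule bounded_linear.tendsto[OF blt lx])
  moreover have "eventually (\<lambda>h. T t ((1 / h) *\<^sub>R (T h x - x)) = (1 / h) *\<^sub>R (T h (T t x) - T t x)) (at_right 0)"
    using eventually_at_right_less[of "0::real"]
  proof eventually_elim
    case (elim h)
    have "T h (T t x) = T t (T h x)"
      using c0D(3)[OF sg, of h t x] c0D(3)[OF sg, of t h x] elim t by (simp add: add.commute)
    then show ?case using blt
      by (simp add: linear_simps)
  qed
  ultimately have lim: "((\<lambda>h. (1 / h) *\<^sub>R (T h (T t x) - T t x)) \<longlongrightarrow> T t (A x)) (at_right 0)"
    by (rule tendsto_cong[THEN iffD1, rotated])
  then show "T t x \<in> D" using gen unfolding generator_def by blast
  then show "((\<lambda>h. (1 / h) *\<^sub>R (T h (T t x) - T t x)) \<longlongrightarrow> A (T t x)) (at_right 0)"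
    using gen unfolding generator_def by blast
qed

lemma isometry_D:
  assumes skew: "skew_adjoint D A" and sg: "c0_semigroup T" and gen: "generator T D A"
    and x: "x \<in> D" and b: "b \<ge> 0"
  shows "norm (T b x) = norm x"
proof -
  define g where "g t = (norm (T t x))\<^sup>2" for t
  have cont: "continuous_on {0..} g" unfolding g_def
    by (intro continuous_intros c0D(4)[OF sg])
  have der: "((\<lambda>h. (g (t+h) - g t)/h) \<longlongrightarrow> 0) (at_right 0)" if t: "t \<ge> 0" for t
  proof -
    define y where "y = T t x"
    have yD: "y \<in> D" and ly: "((\<lambda>h. (1 / h) *\<^sub>R (T h y - y)) \<longlongrightarrow> A y) (at_right 0)"
      using gen_shift[OF sg gen x t] by (auto simp: y_def)
    have iz: "inner (A y) y = 0" by (rule skew_inner_zero[OF skew yD])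
    have "((\<lambda>h. inner ((1 / h) *\<^sub>R (T h y - y)) (T h y + y)) \<longlongrightarrow> inner (A y) (y + y)) (at_right 0)"
      by (intro tendsto_intros ly T_right_cont[OF sg])
    then have l0: "((\<lambda>h. inner ((1 / h) *\<^sub>R (T h y - y)) (T h y + y)) \<longlongrightarrow> 0) (at_right 0)"
      using iz by (simp add: inner_add_right)
    have "eventually (\<lambda>h. inner ((1 / h) *\<^sub>R (T h y - y)) (T h y + y) = (g (t+h) - g t)/h) (at_right 0)"
      using eventually_at_right_less[of "0::real"]
    proof eventually_elim
      case (elim h)
      have "T (t + h) x = T h y"
        using c0D(3)[OF sg, of h t x] elim t by (simp add: add.commute y_def)
      then have "g (t+h) - g t = (norm (T h y))\<^sup>2 - (norm y)\<^sup>2" by (simp add: g_def y_def)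
      also have "\<dots> = inner (T h y - y) (T h y + y)"
        by (simp add: power2_norm_eq_inner inner_diff_right inner_add_left inner_commute[of y "T h y"] algebra_simps)
      finally show ?case by (simp add: divide_inverse mult.commute)
    qed
    with l0 show ?thesis by (rule tendsto_cong[THEN iffD1, rotated])
  qed
  have "g b = g 0" by (rule right_deriv_zero_const[OF cont der b])
  then show ?thesis using c0D(2)[OF sg] by (simp add: g_def)
qed

lemma isometry:
  assumes skew: "skew_adjoint D A" and sg: "c0_semigroup T" and gen: "generator T D A"
    and b: "b \<ge> 0"
  shows "norm (T b x) = norm x"
proof -
  have blt: "bounded_linear (T b)" using c0D(1)[OF sg b] .
  have "closed {x. norm (T b x) = norm x}"
    by (intro closed_Collect_eq continuous_intros linear_continuous_on[OF blt])
  moreover have "D \<subseteq> {x. norm (T b x) = norm x}"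
    using isometry_D[OF skew sg gen _ b] by auto
  ultimately have "closure D \<subseteq> {x. norm (T b x) = norm x}" by (rule closure_minimal[rotated])
  moreover have "x \<in> closure D" using skew unfolding skew_adjoint_def by auto
  ultimately show ?thesis by auto
qed



definition Jint :: "(real \<Rightarrow> 'h::{real_normed_vector, complete_space} \<Rightarrow> 'h) \<Rightarrow> real \<Rightarrow> 'h \<Rightarrow> 'h" where
  "Jint T a y = integral {0..a} (\<lambda>s. T s y)"

lemma J_integrable:
  fixes T :: "real \<Rightarrow> 'h::{real_normed_vector, complete_space} \<Rightarrow> 'h"
  assumes sg: "c0_semigroup T" and "0 \<le> a"
  shows "(\<lambda>s. T s y) integrable_on {a..b}"
proof -
  have "continuous_on {a..b} (\<lambda>s. T s y)"
    by (rule continuous_on_subset[OF c0D(4)[OF sg]]) (use assms in auto)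
  then show ?thesis by (rule cs_integrable)
qed

lemma J_zero_time: "Jint T 0 y = 0"
  by (simp add: Jint_def)

lemma J_bound:
  fixes T :: "real \<Rightarrow> 'h::{real_normed_vector, complete_space} \<Rightarrow> 'h"
  assumes sg: "c0_semigroup T" and iso: "\<And>s x. s \<ge> 0 \<Longrightarrow> norm (T s x) = norm x" and a: "a \<ge> 0"
  shows "norm (Jint T a y) \<le> a * norm y"
proof -
  have "norm (integral {0..a} (\<lambda>s. T s y)) \<le> norm y * (a - 0)"
    by (rule cs_integral_bound[OF a continuous_on_subset[OF c0D(4)[OF sg]]]) (auto simp: iso)
  then show ?thesis by (simp add: Jint_def mult.commute)
qed

lemma J_add:
  fixes T :: "real \<Rightarrow> 'h::{real_normed_vector, complete_space} \<Rightarrow> 'h"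
  assumes sg: "c0_semigroup T" and a: "a \<ge> 0" and b: "b \<ge> 0"
  shows "Jint T (a + b) y = Jint T a y + T a (Jint T b y)"
proof -
  have "integral {0..a} (\<lambda>s. T s y) + integral {a..a+b} (\<lambda>s. T s y) = integral {0..a+b} (\<lambda>s. T s y)"
    by (rule cs_integral_combine) (use a b in \<open>auto intro: continuous_on_subset[OF c0D(4)[OF sg]]\<close>)
  moreover have "integral {a..a+b} (\<lambda>s. T s y) = integral {0..b} (\<lambda>s. T (s + a) y)"
    using integral_shift_real_ivl[where a=a and b="a+b" and c=a and f="\<lambda>s. T s y"] by simp
  moreover have "integral {0..b} (\<lambda>s. T (s + a) y) = integral {0..b} (T a \<circ> (\<lambda>s. T s y))"
  proof (rule integral_cong)
    fix s assume "s \<in> {0..b}"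
    then have "s \<ge> 0" by simp
    then show "T (s + a) y = (T a \<circ> (\<lambda>s. T s y)) s"
      using c0D(3)[OF sg, of a s y] a by (simp add: add.commute)
  qed
  moreover have "integral {0..b} (T a \<circ> (\<lambda>s. T s y)) = T a (integral {0..b} (\<lambda>s. T s y))"
    by (rule integral_linear[OF J_integrable[OF sg] c0D(1)[OF sg a]]) simp
  ultimately show ?thesis by (simp add: Jint_def)
qed

lemma J_diff:
  fixes T :: "real \<Rightarrow> 'h::{real_normed_vector, complete_space} \<Rightarrow> 'h"
  assumes sg: "c0_semigroup T"
  shows "Jint T a (y1 - y2) = Jint T a y1 - Jint T a y2"
proof -
  have "integral {0..a} (\<lambda>s. T s (y1 - y2)) = integral {0..a} (\<lambda>s. T s y1 - T s y2)"
    by (rule integral_cong) (use c0D(1)[OF sg] in \<open>auto simp: linear_simps\<close>)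
  also have "\<dots> = integral {0..a} (\<lambda>s. T s y1) - integral {0..a} (\<lambda>s. T s y2)"
    by (rule integral_diff) (auto intro: J_integrable[OF sg])
  finally show ?thesis by (simp add: Jint_def)
qed

lemma J_lip:
  fixes T :: "real \<Rightarrow> 'h::{real_normed_vector, complete_space} \<Rightarrow> 'h"
  assumes sg: "c0_semigroup T" and iso: "\<And>s x. s \<ge> 0 \<Longrightarrow> norm (T s x) = norm x"
    and a: "a \<ge> 0" and b: "b \<ge> 0"
  shows "dist (Jint T a y) (Jint T b y) \<le> norm y * dist a b"
proof -
  have *: "dist (Jint T u y) (Jint T v y) \<le> norm y * dist u v" if "0 \<le> u" "u \<le> v" for u v
  proof -
    have "Jint T v y = Jint T (u + (v - u)) y" by simp
    also have "\<dots> = Jint T u y + T u (Jint T (v - u) y)"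
      by (rule J_add[OF sg]) (use that in auto)
    finally have "dist (Jint T u y) (Jint T v y) = norm (Jint T (v - u) y)"
      using iso that by (simp add: dist_norm)
    also have "\<dots> \<le> (v - u) * norm y" by (rule J_bound[OF sg iso]) (use that in auto)
    finally show ?thesis using that by (simp add: dist_real_def mult.commute)
  qed
  show ?thesis
  proof (cases "a \<le> b")
    case True then show ?thesis using * a by auto
  next
    case False then show ?thesis using *[of b a] b by (auto simp: dist_commute)
  qed
qed

lemma J_cont:
  fixes T :: "real \<Rightarrow> 'h::{real_normed_vector, complete_space} \<Rightarrow> 'h"
  assumes sg: "c0_semigroup T" and iso: "\<And>s x. s \<ge> 0 \<Longrightarrow> norm (T s x) = norm x"
  shows "continuous_on {0..} (\<lambda>a. Jint T a y)"
proof (rule lipschitz_on_continuous_on)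
  show "(norm y)-lipschitz_on {0..} (\<lambda>a. Jint T a y)"
    unfolding lipschitz_on_def using J_lip[OF sg iso] by auto
qed

lemma duhamel_eq:
  fixes T :: "real \<Rightarrow> 'h::{real_normed_vector, complete_space} \<Rightarrow> 'h"
  assumes "a0 \<le> \<tau>"
  shows "duhamel T f a0 x \<tau> = T (\<tau> - a0) x + Jint T (\<tau> - a0) f"
proof -
  have "integral {a0..\<tau>} (\<lambda>r. T (\<tau> - r) f) = integral {a0 - \<tau>..\<tau> - \<tau>} (\<lambda>r. T (\<tau> - (r + \<tau>)) f)"
    using integral_shift_real_ivl[of a0 \<tau> \<tau> "\<lambda>r. T (\<tau> - r) f"] by simp
  also have "\<dots> = integral {- (\<tau> - a0)..- 0} (\<lambda>r. T (- r) f)" by simp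
  also have "\<dots> = integral {0..\<tau> - a0} (\<lambda>s. T s f)"
    using Henstock_Kurzweil_Integration.integral_reflect_real[of "\<tau> - a0" 0 "\<lambda>s. T s f"] by simp
  finally show ?thesis by (simp add: duhamel_def Jint_def)
qed



lemma exp_neg2_le: fixes x :: real assumes "0 \<le> x" "x \<le> 1/2" shows "exp (-2*x) \<le> 1 - x"
proof -
  have e: "1 + 2*x \<le> exp (2*x)" using exp_ge_add_one_self[of "2*x"] by simp
  have "0 \<le> x * (1 - 2*x)" using assms by (intro mult_nonneg_nonneg) auto
  then have "1 \<le> (1 - x) * (1 + 2*x)" by (simp add: algebra_simps)
  also have "\<dots> \<le> (1 - x) * exp (2*x)" using e assms by (intro mult_left_mono) auto
  finally have "1 \<le> (1 - x) * exp (2*x)" .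
  then have "1 / exp (2*x) \<le> 1 - x" by (simp add: divide_le_eq)
  then show ?thesis by (simp add: exp_minus field_simps)
qed

lemma core:
  fixes T :: "real \<Rightarrow> 'h::{real_normed_vector, complete_space} \<Rightarrow> 'h" and F :: "'h \<Rightarrow> 'h" and zk :: "nat \<Rightarrow> 'h"
    and h :: "nat \<Rightarrow> real"
  assumes sg: "c0_semigroup T" and iso: "\<And>s x. s \<ge> 0 \<Longrightarrow> norm (T s x) = norm x"
    and F: "bounded_linear F"
    and hpos: "\<And>k. h k > 0"
    and hsum: "\<And>k. (\<Sum>j<k. h j) \<le> Lt"
    and rec: "\<And>k. zk (Suc k) = T (h k) (zk k) + Jint T (h k) (F (zk k))"
    and nz: "\<And>k. zk k \<noteq> 0"
    and trig: "\<And>k. g * norm (zk (Suc k)) \<le> KC * norm (zk (Suc k) - zk k)"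
    and gpos: "g > 0" and KC: "KC > 0"
    and base: "\<And>\<epsilon>. \<epsilon> \<ge> 0 \<Longrightarrow> norm (T \<epsilon> (zk 0) + Jint T \<epsilon> (F (zk 0)) - zk 0) \<le> c0 * \<epsilon>"
  shows False
proof -
  obtain LB where LB: "LB > 0" "\<And>x. norm (F x) \<le> norm x * LB"
    using bounded_linear.pos_bounded[OF F] by auto
  define W where "W k \<epsilon> = T \<epsilon> (zk k) + Jint T \<epsilon> (F (zk k))" for k \<epsilon>
  define Lip where "Lip k c \<longleftrightarrow> (\<forall>\<epsilon>\<ge>0. norm (W k \<epsilon> - zk k) \<le> c * \<epsilon>)" for k c
  define S where "S k = (\<Sum>j<k. h j)" for k
  have semiW: "W k (a + b) = T a (W k b) + Jint T a (F (zk k))" if "a \<ge> 0" "b \<ge> 0" for k a b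
  proof -
    have "T (a + b) (zk k) = T a (T b (zk k))" using c0D(3)[OF sg] that by auto
    moreover have "Jint T (a + b) (F (zk k)) = Jint T a (F (zk k)) + T a (Jint T b (F (zk k)))"
      by (rule J_add[OF sg that])
    moreover have "T a (W k b) = T a (T b (zk k)) + T a (Jint T b (F (zk k)))"
      unfolding W_def using c0D(1)[OF sg that(1)] by (simp add: linear_simps)
    ultimately show ?thesis by (simp add: W_def)
  qed
  have diffW: "W k (a + e) - W k a = T a (W k e - zk k)" if "a \<ge> 0" "e \<ge> 0" for k a e
  proof -
    have "W k (a + e) = T a (W k e) + Jint T a (F (zk k))" by (rule semiW[OF that])
    moreover have "W k a = T a (zk k) + Jint T a (F (zk k))" by (simp add: W_def)
    ultimately show ?thesis using c0D(1)[OF sg that(1)] by (simp add: linear_simps)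
  qed
  have zW: "zk (Suc k) = W k (h k)" for k using rec by (simp add: W_def)
  have step: "Lip (Suc k) (c * (1 + LB * h k))" if L: "Lip k c" and c: "c \<ge> 0" for k c
    unfolding Lip_def
  proof (intro allI impI)
    fix e :: real assume e: "e \<ge> 0"
    have hk: "h k \<ge> 0" using hpos[of k] by simp
    have eq: "W (Suc k) e - zk (Suc k) = (W k (h k + e) - W k (h k)) + Jint T e (F (zk (Suc k)) - F (zk k))"
    proof -
      have "W k (e + h k) = T e (W k (h k)) + Jint T e (F (zk k))" by (rule semiW[OF e hk])
      moreover have "Jint T e (F (zk (Suc k)) - F (zk k)) = Jint T e (F (zk (Suc k))) - Jint T e (F (zk k))"
        by (rule J_diff[OF sg])
      ultimately show ?thesis by (simp add: W_def zW add.commute)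
    qed
    have n1: "norm (W k (h k + e) - W k (h k)) \<le> c * e"
      using diffW[OF hk e, of k] iso[OF hk] L e unfolding Lip_def by auto
    have n2: "norm (zk (Suc k) - zk k) \<le> c * h k" using L hk unfolding Lip_def zW by auto
    have "norm (Jint T e (F (zk (Suc k)) - F (zk k))) \<le> e * norm (F (zk (Suc k)) - F (zk k))"
      by (rule J_bound[OF sg iso e])
    also have "\<dots> = e * norm (F (zk (Suc k) - zk k))" using F by (simp add: linear_simps)
    also have "\<dots> \<le> e * (norm (zk (Suc k) - zk k) * LB)" using LB(2) e by (intro mult_left_mono) auto
    also have "\<dots> \<le> e * (c * h k * LB)" using n2 e LB by (intro mult_left_mono mult_right_mono) auto
    finally have n3: "norm (Jint T e (F (zk (Suc k)) - F (zk k))) \<le> e * (c * h k * LB)" .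
    have "norm (W (Suc k) e - zk (Suc k)) \<le> c * e + e * (c * h k * LB)"
      unfolding eq using n1 n3 norm_triangle_le by (meson add_mono order_trans norm_triangle_ineq)
    then show "norm (W (Suc k) e - zk (Suc k)) \<le> c * (1 + LB * h k) * e"
      by (simp add: algebra_simps)
  qed
  have mono: "Lip k c'" if "Lip k c" "c \<le> c'" for k c c'
    using that unfolding Lip_def by (meson mult_right_mono order_trans)
  define c1 where "c1 = max c0 1"
  have c1: "c1 \<ge> 1" by (simp add: c1_def)
  have Lip0: "Lip 0 c1" unfolding Lip_def W_def
    using base c1_def by (meson max.cobounded1 mult_right_mono order_trans)
  have hnn: "h k \<ge> 0" for k using hpos[of k] by simp
  have Sk: "S k \<ge> 0" for k unfolding S_def by (intro sum_nonneg hnn)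
  have LipS: "Lip k (c1 * exp (LB * S k))" for k
  proof (induction k)
    case 0 then show ?case using Lip0 by (simp add: S_def)
  next
    case (Suc k)
    have "Lip (Suc k) (c1 * exp (LB * S k) * (1 + LB * h k))"
      by (rule step[OF Suc]) (use c1 in simp)
    moreover have "c1 * exp (LB * S k) * (1 + LB * h k) \<le> c1 * exp (LB * S (Suc k))"
    proof -
      have "1 + LB * h k \<le> exp (LB * h k)" by (rule exp_ge_add_one_self)
      then have "c1 * exp (LB * S k) * (1 + LB * h k) \<le> c1 * exp (LB * S k) * exp (LB * h k)"
        using c1 by (intro mult_left_mono) auto
      also have "\<dots> = c1 * exp (LB * S (Suc k))"
        by (simp add: S_def distrib_left exp_add)
      finally show ?thesis .
    qed
    ultimately show ?case by (rule mono)
  qed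
  define Cs where "Cs = c1 * exp (LB * Lt)"
  have Cs: "Cs > 0" using c1 by (simp add: Cs_def)
  have dz: "norm (zk (Suc k) - zk k) \<le> Cs * h k" for k
  proof -
    have "Lip k Cs" by (rule mono[OF LipS]) (use hsum[of k] LB c1 in \<open>auto simp: Cs_def S_def\<close>)
    then show ?thesis unfolding Lip_def zW using hnn[of k] by auto
  qed
  have lower: "norm (zk (Suc k)) \<ge> norm (zk k) * (1 - LB * h k)" for k
  proof -
    have "norm (Jint T (h k) (F (zk k))) \<le> h k * norm (F (zk k))" by (rule J_bound[OF sg iso hnn])
    also have "\<dots> \<le> h k * (norm (zk k) * LB)" using LB(2) hnn[of k] by (intro mult_left_mono) auto
    finally have j: "norm (Jint T (h k) (F (zk k))) \<le> h k * (norm (zk k) * LB)" .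
    have "norm (zk (Suc k)) \<ge> norm (T (h k) (zk k)) - norm (Jint T (h k) (F (zk k)))"
      unfolding rec by (metis norm_diff_ineq norm_minus_cancel diff_minus_eq_add)
    then show ?thesis using j iso[OF hnn[of k]] by (simp add: algebra_simps)
  qed
  have summ: "summable h"
    by (rule summableI_nonneg_bounded[where x=Lt]) (use hnn hsum in auto)
  have h0: "h \<longlonglongrightarrow> 0" by (rule summable_LIMSEQ_zero[OF summ])
  have "eventually (\<lambda>k. h k < 1 / (2 * LB)) sequentially"
    using h0 by (rule order_tendstoD) (use LB in simp)
  then obtain N where N: "\<And>k. k \<ge> N \<Longrightarrow> h k < 1 / (2 * LB)" by (auto simp: eventually_sequentially)
  have lowN: "norm (zk k) \<ge> norm (zk N) * exp (-2 * LB * (S k - S N))" if "k \<ge> N" for k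
    using that
  proof (induction k rule: dec_induct)
    case base then show ?case by simp
  next
    case (step k)
    have x: "LB * h k \<le> 1/2" using N[OF step(1)] LB by (simp add: field_simps)
    have "norm (zk N) * exp (-2 * LB * (S (Suc k) - S N))
        = norm (zk N) * exp (-2 * LB * (S k - S N)) * exp (-2 * (LB * h k))"
      by (simp add: S_def algebra_simps exp_add[symmetric])
    also have "\<dots> \<le> norm (zk k) * exp (-2 * (LB * h k))"
      using step(3) by (intro mult_right_mono) auto
    also have "\<dots> \<le> norm (zk k) * (1 - LB * h k)"
      by (intro mult_left_mono exp_neg2_le x) (use LB hnn[of k] in auto)
    also have "\<dots> \<le> norm (zk (Suc k))" by (rule lower)
    finally show ?case .
  qed
  define m where "m = norm (zk N) * exp (-2 * LB * Lt)"
  have m: "m > 0" using nz[of N] by (simp add: m_def)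
  have mk: "norm (zk k) \<ge> m" if "k \<ge> N" for k
  proof -
    have "S k - S N \<le> Lt" using hsum[of k] Sk[of N] by (simp add: S_def)
    then have "exp (-2 * LB * Lt) \<le> exp (-2 * LB * (S k - S N))" using LB by simp
    then have "m \<le> norm (zk N) * exp (-2 * LB * (S k - S N))"
      unfolding m_def by (intro mult_left_mono) auto
    with lowN[OF that] show ?thesis by simp
  qed
  have hbig: "h k \<ge> g * m / (KC * Cs)" if "k \<ge> N" for k
  proof -
    have "g * m \<le> g * norm (zk (Suc k))" using mk[of "Suc k"] that gpos by simp
    also have "\<dots> \<le> KC * norm (zk (Suc k) - zk k)" by (rule trig)
    also have "\<dots> \<le> KC * (Cs * h k)" using dz KC by (intro mult_left_mono) auto
    finally show ?thesis using KC Cs by (simp add: field_simps)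
  qed
  have "eventually (\<lambda>k. h k < g * m / (KC * Cs)) sequentially"
    using h0 by (rule order_tendstoD) (use gpos m KC Cs in simp)
  then obtain N2 where "\<And>k. k \<ge> N2 \<Longrightarrow> h k < g * m / (KC * Cs)" by (auto simp: eventually_sequentially)
  from this[of "max N N2"] hbig[of "max N N2"] show False by simp
qed



lemma domain_lip:
  fixes T :: "real \<Rightarrow> 'h::{real_normed_vector, complete_space} \<Rightarrow> 'h"
  assumes sg: "c0_semigroup T" and iso: "\<And>s x. s \<ge> 0 \<Longrightarrow> norm (T s x) = norm x"
    and gen: "generator T D A" and x: "x \<in> D"
  shows "\<exists>M. \<forall>e\<ge>0. norm (T e x - x) \<le> M * e"
proof -
  have lx: "((\<lambda>h. (1 / h) *\<^sub>R (T h x - x)) \<longlongrightarrow> A x) (at_right 0)"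
    using gen x unfolding generator_def by auto
  have "eventually (\<lambda>h. norm ((1 / h) *\<^sub>R (T h x - x)) < norm (A x) + 1) (at_right 0)"
    using tendsto_norm[OF lx] by (rule order_tendstoD) simp
  then obtain d where d: "d > 0" and dH: "\<And>h. h > 0 \<Longrightarrow> h < d \<Longrightarrow> norm ((1 / h) *\<^sub>R (T h x - x)) < norm (A x) + 1"
    by (auto simp: eventually_at_right_field)
  define M where "M = norm (A x) + 1 + 2 * norm x / d"
  have "norm (T e x - x) \<le> M * e" if e: "e \<ge> 0" for e
  proof (cases "e = 0")
    case True then show ?thesis using c0D(2)[OF sg] by simp
  next
    case False
    then have ep: "e > 0" using e by simp
    show ?thesis
    proof (cases "e < d")
      case True
      have "norm (T e x - x) = e * norm ((1 / e) *\<^sub>R (T e x - x))" using ep by simp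
      also have "\<dots> \<le> e * (norm (A x) + 1)" using dH[OF ep True] ep by (intro mult_left_mono) auto
      also have "\<dots> \<le> M * e" using ep d by (simp add: M_def algebra_simps)
      finally show ?thesis .
    next
      case False
      have "norm (T e x - x) \<le> norm (T e x) + norm x" by (rule norm_triangle_ineq4)
      also have "\<dots> = 2 * norm x" using iso e by simp
      also have "\<dots> \<le> (2 * norm x / d) * e"
        using False d by (simp add: field_simps mult_right_mono)
      also have "\<dots> \<le> M * e" using ep by (intro mult_right_mono) (auto simp: M_def)
      finally show ?thesis .
    qed
  qed
  then show ?thesis by blast
qed

lemma Dcont:
  fixes T :: "real \<Rightarrow> 'h::{real_normed_vector, complete_space} \<Rightarrow> 'h"
  assumes sg: "c0_semigroup T" and iso: "\<And>s x. s \<ge> 0 \<Longrightarrow> norm (T s x) = norm x"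
  shows "continuous_on {a..} (\<lambda>\<tau>. T (\<tau> - a) x + Jint T (\<tau> - a) f)"
proof (intro continuous_intros)
  show "continuous_on {a..} (\<lambda>\<tau>. T (\<tau> - a) x)"
    by (rule continuous_on_compose2[OF c0D(4)[OF sg, of x]]) (auto intro!: continuous_intros)
  show "continuous_on {a..} (\<lambda>\<tau>. Jint T (\<tau> - a) f)"
    by (rule continuous_on_compose2[OF J_cont[OF sg iso, of f]]) (auto intro!: continuous_intros)
qed

lemma trig_step:
  fixes T :: "real \<Rightarrow> 'h::{real_normed_vector, complete_space} \<Rightarrow> 'h" and C :: "'h \<Rightarrow> 'y::real_normed_vector"
  assumes sg: "c0_semigroup T" and iso: "\<And>s x. s \<ge> 0 \<Longrightarrow> norm (T s x) = norm x"
    and C: "bounded_linear C" and gamma: "\<gamma> > 0"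
    and f0: "x = 0 \<Longrightarrow> f = 0"
    and tn: "tn = Sup {ereal s | s. ereal s > ereal a \<and>
         (\<forall>\<tau>. ereal a \<le> ereal \<tau> \<and> \<tau> < s \<longrightarrow>
            (norm (C (duhamel T f a x \<tau>) - C x))\<^sup>2 \<le> \<gamma>\<^sup>2 * (norm (duhamel T f a x \<tau>))\<^sup>2)}"
    and fin: "tn \<noteq> \<infinity>"
  shows "x \<noteq> 0 \<and> (\<exists>b. tn = ereal b \<and> b > a \<and>
           \<gamma>\<^sup>2 * (norm (duhamel T f a x b))\<^sup>2 \<le> (norm (C (duhamel T f a x b) - C x))\<^sup>2)"
proof -
  define S where "S = {ereal s | s. ereal s > ereal a \<and>
         (\<forall>\<tau>. ereal a \<le> ereal \<tau> \<and> \<tau> < s \<longrightarrow>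
            (norm (C (duhamel T f a x \<tau>) - C x))\<^sup>2 \<le> \<gamma>\<^sup>2 * (norm (duhamel T f a x \<tau>))\<^sup>2)}"
  define D' where "D' \<tau> = T (\<tau> - a) x + Jint T (\<tau> - a) f" for \<tau>
  have DD: "duhamel T f a x \<tau> = D' \<tau>" if "a \<le> \<tau>" for \<tau>
    using duhamel_eq[OF that] by (simp add: D'_def)
  have contD: "continuous_on {a..} D'" unfolding D'_def
  proof (intro continuous_intros)
    show "continuous_on {a..} (\<lambda>\<tau>. T (\<tau> - a) x)"
      by (rule continuous_on_compose2[OF c0D(4)[OF sg, of x]]) (auto intro!: continuous_intros)
    show "continuous_on {a..} (\<lambda>\<tau>. Jint T (\<tau> - a) f)"
      by (rule continuous_on_compose2[OF J_cont[OF sg iso, of f]]) (auto intro!: continuous_intros)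
  qed
  define Q where "Q \<tau> = \<gamma>\<^sup>2 * (norm (D' \<tau>))\<^sup>2 - (norm (C (D' \<tau>) - C x))\<^sup>2" for \<tau>
  have contQ: "continuous_on {a..} Q" unfolding Q_def
    by (intro continuous_intros contD continuous_on_compose2[OF linear_continuous_on[OF C] contD]) auto
  have tnS: "tn = Sup S" using tn by (simp add: S_def)
  have ext: "\<exists>d>0. ereal (b + d) \<in> S" if b: "b \<ge> a"
    and G: "\<And>\<tau>. a \<le> \<tau> \<Longrightarrow> \<tau> < b \<Longrightarrow> (norm (C (D' \<tau>) - C x))\<^sup>2 \<le> \<gamma>\<^sup>2 * (norm (D' \<tau>))\<^sup>2"
    and Qb: "Q b > 0" for b
  proof -
    have "(Q \<longlongrightarrow> Q b) (at b within {a..})" using contQ b by (simp add: continuous_on_def)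
    then have "eventually (\<lambda>u. Q u > 0) (at b within {a..})" using Qb by (rule order_tendstoD)
    then obtain d where d: "d > 0" and dH: "\<And>u. u \<in> {a..} \<Longrightarrow> u \<noteq> b \<Longrightarrow> dist u b < d \<Longrightarrow> Q u > 0"
      by (auto simp: eventually_at)
    have "ereal (b + d) \<in> S" unfolding S_def
    proof (intro CollectI exI conjI allI impI)
      show "ereal (b + d) = ereal (b + d)" ..
      show "ereal a < ereal (b + d)" using b d by simp
      fix \<tau> assume \<tau>: "ereal a \<le> ereal \<tau> \<and> \<tau> < b + d"
      then have a\<tau>: "a \<le> \<tau>" by simp
      show "(norm (C (duhamel T f a x \<tau>) - C x))\<^sup>2 \<le> \<gamma>\<^sup>2 * (norm (duhamel T f a x \<tau>))\<^sup>2"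
      proof (cases "\<tau> < b")
        case True then show ?thesis using G[OF a\<tau>] DD[OF a\<tau>] by simp
      next
        case False
        have "Q \<tau> > 0"
        proof (cases "\<tau> = b")
          case True then show ?thesis using Qb by simp
        next
          case False
          then show ?thesis using dH[of \<tau>] a\<tau> \<tau> \<open>\<not> \<tau> < b\<close> by (auto simp: dist_real_def)
        qed
        then show ?thesis using DD[OF a\<tau>] by (simp add: Q_def)
      qed
    qed
    then show ?thesis using d by blast
  qed
  have xnz: "x \<noteq> 0"
  proof
    assume x0: "x = 0"
    then have ff: "f = 0" by (rule f0)
    have D0: "D' \<tau> = 0" if "a \<le> \<tau>" for \<tau>
    proof -
      have "T (\<tau> - a) 0 = 0" using c0D(1)[OF sg, of "\<tau> - a"] that by (simp add: linear_simps)
      moreover have "Jint T (\<tau> - a) 0 = 0" using J_diff[OF sg, of "\<tau> - a" 0 0] by simp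
      ultimately show ?thesis by (simp add: D'_def x0 ff)
    qed
    have "ereal B \<le> tn" for B
    proof -
      have "ereal (max B (a + 1)) \<in> S" unfolding S_def
        using DD D0 x0 by (auto intro!: exI[of _ "max B (a + 1)"])
      then have "ereal (max B (a + 1)) \<le> tn" unfolding tnS by (rule Sup_upper)
      then show ?thesis by (meson ereal_less_eq(3) max.cobounded1 order_trans)
    qed
    then have "tn = \<infinity>" by (rule ereal_top)
    with fin show False by simp
  qed
  have Da: "D' a = x" using c0D(2)[OF sg] by (simp add: D'_def J_zero_time)
  have "Q a > 0" using xnz gamma by (simp add: Q_def Da)
  then obtain d where d: "d > 0" and dS: "ereal (a + d) \<in> S" using ext[of a] by auto
  have ge: "ereal (a + d) \<le> tn" unfolding tnS using dS by (rule Sup_upper)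
  then obtain b where b: "tn = ereal b" using fin by (cases tn) auto
  have ab: "b > a" using ge b d by simp
  have G: "(norm (C (D' \<tau>) - C x))\<^sup>2 \<le> \<gamma>\<^sup>2 * (norm (D' \<tau>))\<^sup>2" if "a \<le> \<tau>" "\<tau> < b" for \<tau>
  proof -
    have "ereal \<tau> < Sup S" using that b tnS by simp
    then obtain y where "y \<in> S" "ereal \<tau> < y" by (auto simp: less_Sup_iff)
    then obtain s where "y = ereal s" "\<forall>\<tau>. ereal a \<le> ereal \<tau> \<and> \<tau> < s \<longrightarrow>
            (norm (C (duhamel T f a x \<tau>) - C x))\<^sup>2 \<le> \<gamma>\<^sup>2 * (norm (duhamel T f a x \<tau>))\<^sup>2" "\<tau> < s"
      unfolding S_def by auto
    then show ?thesis using that DD[OF that(1)] by auto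
  qed
  have "\<not> Q b > 0"
  proof
    assume "Q b > 0"
    then obtain d where d: "d > 0" and dS: "ereal (b + d) \<in> S" using ext[of b] ab G by auto
    have "ereal (b + d) \<le> tn" unfolding tnS using dS by (rule Sup_upper)
    then show False using b d by simp
  qed
  then have "\<gamma>\<^sup>2 * (norm (duhamel T f a x b))\<^sup>2 \<le> (norm (C (duhamel T f a x b) - C x))\<^sup>2"
    using DD[of b] ab by (simp add: Q_def)
  then show ?thesis using xnz b ab by blast
qed



theorem theorem4:
  fixes T :: "real \<Rightarrow> 'h::{real_inner, complete_space} \<Rightarrow> 'h"
    and D :: "'h set" and A :: "'h \<Rightarrow> 'h"
    and B :: "'u::{real_inner, complete_space} \<Rightarrow> 'h"
    and C :: "'h \<Rightarrow> 'y::{real_inner, complete_space}"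
    and K :: "'y \<Rightarrow> 'u"
    and \<gamma> :: real and z0 :: 'h
    and z :: "real \<Rightarrow> 'h" and t :: "nat \<Rightarrow> ereal"
  assumes skew: "skew_adjoint D A"
    and sg: "c0_semigroup T" and gen: "generator T D A"
    and B: "bounded_linear B" and C: "bounded_linear C" and K: "bounded_linear K"
    and gamma: "\<gamma> > 0"
    and t0: "t 0 = 0"
    and trig: "\<And>k. t k < \<infinity> \<Longrightarrow>
       t (Suc k) = Sup {ereal s | s. ereal s > t k \<and>
         (\<forall>\<tau>. t k \<le> ereal \<tau> \<and> \<tau> < s \<longrightarrow>
            (norm (C (duhamel T (B (K (C (z (real_of_ereal (t k)))))) (real_of_ereal (t k))
                        (z (real_of_ereal (t k))) \<tau>) - C (z (real_of_ereal (t k)))))\<^sup>2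
            \<le> \<gamma>\<^sup>2 * (norm (duhamel T (B (K (C (z (real_of_ereal (t k)))))) (real_of_ereal (t k))
                        (z (real_of_ereal (t k))) \<tau>))\<^sup>2)}"
    and stop: "\<And>k. t k = \<infinity> \<Longrightarrow> t (Suc k) = \<infinity>"
    and init: "z 0 = z0"
    and sol: "\<And>k \<tau>. t k \<le> ereal \<tau> \<Longrightarrow> ereal \<tau> < t (Suc k) \<Longrightarrow> ereal \<tau> < Tstar t \<Longrightarrow>
       z \<tau> = duhamel T (B (K (C (z (real_of_ereal (t k)))))) (real_of_ereal (t k))
                (z (real_of_ereal (t k))) \<tau>"
    and cont: "continuous_on {\<tau>. 0 \<le> \<tau> \<and> ereal \<tau> < Tstar t} z"
    and z0D: "z0 \<in> D"
  shows "Tstar t = \<infinity>"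
proof (rule ccontr)
  assume nT: "Tstar t \<noteq> \<infinity>"
  have fin: "t k \<noteq> \<infinity>" for k
  proof
    assume "t k = \<infinity>"
    then have "Tstar t = \<infinity>" unfolding Tstar_def by auto
    with nT show False by simp
  qed
  have TL: "Tstar t = limsup t" using fin by (auto simp: Tstar_def)
  have iso: "\<And>s x. s \<ge> 0 \<Longrightarrow> norm (T s x) = norm x" using isometry[OF skew sg gen] by blast
  define r where "r k = real_of_ereal (t k)" for k
  define F where "F x = B (K (C x))" for x
  have F: "bounded_linear F" unfolding F_def
    by (rule bounded_linear_compose[OF B bounded_linear_compose[OF K C]])
  have stepk: "z (r k) \<noteq> 0 \<and> (\<exists>b. t (Suc k) = ereal b \<and> b > r k \<and>
           \<gamma>\<^sup>2 * (norm (duhamel T (F (z (r k))) (r k) (z (r k)) b))\<^sup>2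
             \<le> (norm (C (duhamel T (F (z (r k))) (r k) (z (r k)) b) - C (z (r k))))\<^sup>2)"
    if tk: "t k = ereal (r k)" for k
  proof (rule trig_step[OF sg iso C gamma])
    show "z (r k) = 0 \<Longrightarrow> F (z (r k)) = 0" using F by (simp add: linear_simps)
    show "t (Suc k) \<noteq> \<infinity>" by (rule fin)
    have "t k < \<infinity>" using tk by simp
    from trig[OF this] show "t (Suc k) = Sup {ereal s | s. ereal s > ereal (r k) \<and>
         (\<forall>\<tau>. ereal (r k) \<le> ereal \<tau> \<and> \<tau> < s \<longrightarrow>
            (norm (C (duhamel T (F (z (r k))) (r k) (z (r k)) \<tau>) - C (z (r k))))\<^sup>2
              \<le> \<gamma>\<^sup>2 * (norm (duhamel T (F (z (r k))) (r k) (z (r k)) \<tau>))\<^sup>2)}"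
      by (simp only: F_def[symmetric] tk real_of_ereal.simps)
  qed
  have fink: "t k = ereal (r k)" for k
  proof (induction k)
    case 0 then show ?case using t0 by (simp add: r_def zero_ereal_def)
  next
    case (Suc k)
    then obtain b where "t (Suc k) = ereal b" using stepk by blast
    then show ?case by (simp add: r_def)
  qed
  have incr: "r k < r (Suc k)" for k
    using stepk[OF fink[of k]] fink[of "Suc k"] by auto
  have znz: "z (r k) \<noteq> 0" for k using stepk[OF fink[of k]] by blast
  have fail: "\<gamma>\<^sup>2 * (norm (duhamel T (F (z (r k))) (r k) (z (r k)) (r (Suc k))))\<^sup>2
             \<le> (norm (C (duhamel T (F (z (r k))) (r k) (z (r k)) (r (Suc k))) - C (z (r k))))\<^sup>2" for k
    using stepk[OF fink[of k]] fink[of "Suc k"] by auto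
  have r0: "r 0 = 0" using t0 by (simp add: r_def)
  have rnn: "r k \<ge> 0" for k
    by (induction k) (use r0 incr in \<open>auto intro: order.trans less_imp_le\<close>)
  have inc: "incseq t"
    by (rule incseq_SucI) (use fink incr in \<open>auto simp: less_imp_le\<close>)
  have TS: "Tstar t = (SUP k. t k)"
    unfolding TL by (rule lim_imp_Limsup[OF trivial_limit_sequentially LIMSEQ_SUP[OF inc]])
  have "Tstar t \<ge> t 0" unfolding TS by (rule SUP_upper) simp
  then have "Tstar t \<noteq> - \<infinity>" using t0 by auto
  then obtain Lt where Lt: "Tstar t = ereal Lt" using nT by (cases "Tstar t") auto
  have rlt: "r k < Lt" for k
  proof -
    have "t (Suc k) \<le> Tstar t" unfolding TS by (rule SUP_upper) simp
    then have "r (Suc k) \<le> Lt" using fink[of "Suc k"] Lt by simp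
    then show ?thesis using incr[of k] by simp
  qed
  define Dk where "Dk k \<tau> = T (\<tau> - r k) (z (r k)) + Jint T (\<tau> - r k) (F (z (r k)))" for k \<tau>
  have DD: "duhamel T (F (z (r k))) (r k) (z (r k)) \<tau> = Dk k \<tau>" if "r k \<le> \<tau>" for k \<tau>
    using duhamel_eq[OF that] by (simp add: Dk_def)
  have zrec: "z (r (Suc k)) = Dk k (r (Suc k))" for k
  proof -
    define a where "a = r k"
    define b where "b = r (Suc k)"
    have ab: "a < b" using incr by (simp add: a_def b_def)
    have a0: "a \<ge> 0" using rnn by (simp add: a_def)
    have bL: "b < Lt" using rlt by (simp add: b_def)
    define U where "U = {\<tau>. 0 \<le> \<tau> \<and> ereal \<tau> < Tstar t}"
    have bU: "b \<in> U" using a0 ab bL Lt by (simp add: U_def)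
    have sub: "{a<..<b} \<subseteq> U" using a0 bL Lt by (auto simp: U_def)
    have "(z \<longlongrightarrow> z b) (at b within U)" using cont bU by (simp add: U_def continuous_on_def)
    then have l1: "(z \<longlongrightarrow> z b) (at b within {a<..<b})" by (rule tendsto_within_subset[OF _ sub])
    have Dkf: "Dk k = (\<lambda>\<tau>. T (\<tau> - a) (z (r k)) + Jint T (\<tau> - a) (F (z (r k))))"
      by (simp add: fun_eq_iff Dk_def a_def)
    have "continuous_on {a..} (Dk k)" unfolding Dkf by (rule Dcont[OF sg iso])
    then have "(Dk k \<longlongrightarrow> Dk k b) (at b within {a..})" using ab by (simp add: continuous_on_def)
    then have l2: "(Dk k \<longlongrightarrow> Dk k b) (at b within {a<..<b})" by (rule tendsto_within_subset) auto
    have ev: "eventually (\<lambda>\<tau>. z \<tau> = Dk k \<tau>) (at b within {a<..<b})"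
      unfolding eventually_at_filter
    proof (intro always_eventually allI impI)
      fix \<tau> assume "\<tau> \<noteq> b" "\<tau> \<in> {a<..<b}"
      then have \<tau>: "a < \<tau>" "\<tau> < b" by auto
      have "z \<tau> = duhamel T (B (K (C (z (real_of_ereal (t k)))))) (real_of_ereal (t k))
                (z (real_of_ereal (t k))) \<tau>"
      proof (rule sol)
        show "t k \<le> ereal \<tau>" using fink[of k] \<tau> by (simp add: a_def)
        show "ereal \<tau> < t (Suc k)" using fink[of "Suc k"] \<tau> by (simp add: b_def)
        show "ereal \<tau> < Tstar t" using Lt \<tau> bL by simp
      qed
      also have "\<dots> = Dk k \<tau>" unfolding r_def[symmetric] F_def[symmetric]
        by (rule DD) (use \<tau> in \<open>simp add: a_def\<close>)
      finally show "z \<tau> = Dk k \<tau>" .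
    qed
    have l3: "(Dk k \<longlongrightarrow> z b) (at b within {a<..<b})"
      using l1 ev by (rule Lim_transform_eventually)
    have "at b within {a<..<b} = at b within {..<b}"
      by (rule at_within_nhd[where S="{a<..}"]) (use ab in auto)
    then have ntriv: "at b within {a<..<b} \<noteq> bot" by simp
    have "z b = Dk k b" by (rule tendsto_unique[OF ntriv l3 l2])
    then show ?thesis by (simp add: b_def)
  qed
  obtain KC where KC: "KC > 0" "\<And>x. norm (C x) \<le> norm x * KC"
    using bounded_linear.pos_bounded[OF C] by auto
  obtain M where M: "\<And>e. e \<ge> 0 \<Longrightarrow> norm (T e z0 - z0) \<le> M * e"
    using domain_lip[OF sg iso gen z0D] by auto
  define zk where "zk k = z (r k)" for k
  define h where "h k = r (Suc k) - r k" for k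
  show False
  proof (rule core[OF sg iso F])
    show "h k > 0" for k using incr by (simp add: h_def)
    show "(\<Sum>j<k. h j) \<le> Lt" for k
      using sum_lessThan_telescope[of r k] r0 rlt[of k] by (simp add: h_def)
    show "zk (Suc k) = T (h k) (zk k) + Jint T (h k) (F (zk k))" for k
      using zrec[of k] by (simp add: zk_def h_def Dk_def)
    show "zk k \<noteq> 0" for k using znz by (simp add: zk_def)
    show "\<gamma> * norm (zk (Suc k)) \<le> KC * norm (zk (Suc k) - zk k)" for k
    proof -
      have le: "(\<gamma> * norm (zk (Suc k)))\<^sup>2 \<le> (norm (C (zk (Suc k)) - C (zk k)))\<^sup>2"
        using fail[of k] DD[of k "r (Suc k)"] zrec[of k] incr[of k]
        by (simp add: zk_def power_mult_distrib)
      have "\<gamma> * norm (zk (Suc k)) \<le> norm (C (zk (Suc k)) - C (zk k))"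
        by (rule power2_le_imp_le[OF le]) simp
      also have "\<dots> = norm (C (zk (Suc k) - zk k))" using C by (simp add: linear_simps)
      also have "\<dots> \<le> norm (zk (Suc k) - zk k) * KC" by (rule KC(2))
      finally show ?thesis by (simp add: mult.commute)
    qed
    show "\<gamma> > 0" by (rule gamma)
    show "KC > 0" by (rule KC(1))
    show "norm (T e (zk 0) + Jint T e (F (zk 0)) - zk 0) \<le> (M + norm (F z0)) * e" if e: "e \<ge> 0" for e
    proof -
      have z00: "zk 0 = z0" using r0 init by (simp add: zk_def)
      have "norm (T e z0 + Jint T e (F z0) - z0) \<le> norm (T e z0 - z0) + norm (Jint T e (F z0))"
        by (metis add_diff_eq diff_add_eq norm_triangle_ineq add.commute)
      also have "\<dots> \<le> M * e + e * norm (F z0)"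
        by (intro add_mono M e J_bound[OF sg iso e])
      finally show ?thesis by (simp add: z00 algebra_simps)
    qed
  qed
qed

end
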